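(* Let $0<\alpha<1$ and for integers $t\ge 1$ define $$S(t)\triangleq\sum_{i=1}^{t-1}\frac{\alpha^{t-i}}{i+1}$$ (so $S(1)=0$). Let $t_0=\left\lceil \frac{2\alpha}{1-\alpha}\right\rceil$ and $A=\max\left\{t_0\, S(t_0),\ \frac{2\alpha}{1-\alpha}\right\}$. Then for all integers $t\ge t_0$, $$S(t)\le \frac{A}{t}.$$
   Context: In the paper, $\alpha=(1-\eta\mu)^E$ is the contraction factor of $E$ gradient-descent steps with step size $\eta\in(0,\frac{2}{\mu+L}]$ on a $\mu$-strongly convex, $L$-smooth function. *)

theory Defs
  imports Complex_Main
begin

definition S :: "real \<Rightarrow> nat \<Rightarrow> real" where
  "S \<alpha> t = (\<Sum>i=1..t-1. \<alpha> ^ (t - i) / (real i + 1))"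

end

theory Submission
  imports Defs
begin

lemma S_rec:
  fixes \<alpha> :: real
  shows "S \<alpha> (Suc (Suc m)) = \<alpha> * S \<alpha> (Suc m) + \<alpha> / (real (Suc m) + 1)"
proof -
  have "S \<alpha> (Suc (Suc m)) = (\<Sum>i=1..Suc m. \<alpha> ^ (Suc (Suc m) - i) / (real i + 1))"
    by (simp add: S_def)
  also have "\<dots> = (\<Sum>i=1..m. \<alpha> ^ (Suc (Suc m) - i) / (real i + 1)) + \<alpha> / (real (Suc m) + 1)"
    by (simp add: sum.cl_ivl_Suc)
  also have "(\<Sum>i=1..m. \<alpha> ^ (Suc (Suc m) - i) / (real i + 1)) = (\<Sum>i=1..m. \<alpha> * (\<alpha> ^ (Suc m - i) / (real i + 1)))"
    by (rule sum.cong) (auto simp: Suc_diff_le)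
  also have "\<dots> = \<alpha> * S \<alpha> (Suc m)"
    by (simp add: S_def sum_distrib_left)
  finally show ?thesis .
qed

theorem proposition1:
  fixes \<alpha> :: real
  assumes "0 < \<alpha>" and "\<alpha> < 1"
  defines "t0 \<equiv> nat \<lceil>2 * \<alpha> / (1 - \<alpha>)\<rceil>"
  defines "A \<equiv> max (real t0 * S \<alpha> t0) (2 * \<alpha> / (1 - \<alpha>))"
  shows "\<forall>t::nat. t \<ge> t0 \<longrightarrow> S \<alpha> t \<le> A / real t"
proof (intro allI impI)
  fix t :: nat assume "t0 \<le> t"
  define c where "c = 2 * \<alpha> / (1 - \<alpha>)"
  have cpos: "c > 0" using assms(1,2) by (simp add: c_def)
  have t0c: "real t0 \<ge> c" unfolding t0_def c_def[symmetric] by linarith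
  have t0pos: "t0 \<ge> 1" using t0c cpos by linarith
  have Ac: "A \<ge> c" unfolding A_def c_def by simp
  show "S \<alpha> t \<le> A / real t" using \<open>t0 \<le> t\<close>
  proof (induction t rule: dec_induct)
    case base
    have "real t0 * S \<alpha> t0 \<le> A" unfolding A_def by simp
    then show ?case using t0pos by (simp add: field_simps)
  next
    case (step n)
    have n1: "n \<ge> 1" using step.hyps t0pos by simp
    then obtain m where m: "n = Suc m" by (cases n) auto
    have nc: "real n \<ge> c" using step.hyps t0c by linarith
    have npos: "real n > 0" using n1 by simp
    have key: "A * ((1 - \<alpha>) * real n - \<alpha>) \<ge> \<alpha> * real n"
    proof -
      have h1: "(1 - \<alpha>) * real n \<ge> 2 * \<alpha>"
        using nc assms(2) unfolding c_def by (simp add: field_simps)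
      have h2: "(1 - \<alpha>) * real n - \<alpha> \<ge> (1 - \<alpha>) * real n / 2" using h1 by linarith
      have "A * ((1 - \<alpha>) * real n - \<alpha>) \<ge> c * ((1 - \<alpha>) * real n / 2)"
        apply (rule mult_mono[OF Ac h2]) using cpos h1 Ac assms(1) by auto
      also have "c * ((1 - \<alpha>) * real n / 2) = \<alpha> * real n"
        using assms(2) unfolding c_def by (simp add: field_simps)
      finally show ?thesis .
    qed
    have "S \<alpha> (Suc n) = \<alpha> * S \<alpha> n + \<alpha> / (real n + 1)"
      using S_rec[of \<alpha> m] m by simp
    also have "\<dots> \<le> \<alpha> * (A / real n) + \<alpha> / (real n + 1)"
      using mult_left_mono[OF step.IH] assms(1) by simp
    also have "\<dots> \<le> A / real (Suc n)"
    proof -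
      have "\<alpha> * (A / real n) + \<alpha> / (real n + 1) = (\<alpha> * A * (real n + 1) + \<alpha> * real n) / (real n * (real n + 1))"
        using npos by (simp add: field_simps)
      also have "\<dots> \<le> (A * real n) / (real n * (real n + 1))"
        apply (rule divide_right_mono) using key npos by (auto simp: algebra_simps)
      also have "\<dots> = A / real (Suc n)" using npos by simp
      finally show ?thesis .
    qed
    finally show ?case .
  qed
qed

end
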